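(* There is a c.e. set $A\subseteq\omega$ such that the density of $A$ exists, yet for every $\Pi^0_1$ subset $B$ of $A$ we have $\underline{\rho}(A\setminus B)>0$, and hence $d(A,B)>0$.
   Context: For $S\subseteq\omega$ and $n>0$, $\rho_n(S)=|S\cap[0,n)|/n$; $\underline{\rho}(S)=\liminf_n\rho_n(S)$, and the density is $\lim_n\rho_n(S)$ when it exists. For $A,B\subseteq\omega$, $d(A,B)=\underline{\rho}(A\triangle B)$. *)

theory Defs
  imports Complex_Main "HOL-Library.Extended_Real"
begin

(* Primitive recursive functions of arity n, as functions on argument lists
   (only their values on lists of length n matter). *)
inductive PR :: "nat \<Rightarrow> (nat list \<Rightarrow> nat) \<Rightarrow> bool" where
  pr_zero: "PR n (\<lambda>_. 0)"
| pr_succ: "PR 1 (\<lambda>xs. Suc (hd xs))"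
| pr_proj: "i < n \<Longrightarrow> PR n (\<lambda>xs. xs ! i)"
| pr_comp: "PR m f \<Longrightarrow> length gs = m \<Longrightarrow> (\<forall>g\<in>set gs. PR n g) \<Longrightarrow>
            PR n (\<lambda>xs. f (map (\<lambda>g. g xs) gs))"
| pr_rec: "PR n g \<Longrightarrow> PR (Suc (Suc n)) h \<Longrightarrow>
           PR (Suc n) (\<lambda>xs. rec_nat (g (tl xs)) (\<lambda>y r. h (y # r # tl xs)) (hd xs))"

(* c.e. = Sigma^0_1: projection of a primitive recursive relation *)
definition ce :: "nat set \<Rightarrow> bool" where
  "ce A \<longleftrightarrow> (\<exists>f. PR 2 f \<and> (\<forall>x. x \<in> A \<longleftrightarrow> (\<exists>y. f [x, y] = 0)))"

definition Pi01 :: "nat set \<Rightarrow> bool" where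
  "Pi01 B \<longleftrightarrow> ce (- B)"

definition rho :: "nat set \<Rightarrow> nat \<Rightarrow> real" where
  "rho S n = real (card (S \<inter> {..<n})) / real n"

definition has_density :: "nat set \<Rightarrow> bool" where
  "has_density S \<longleftrightarrow> (\<exists>L. (\<lambda>n. rho S (Suc n)) \<longlonglongrightarrow> L)"

definition lower_density :: "nat set \<Rightarrow> ereal" where
  "lower_density S = liminf (\<lambda>n. ereal (rho S (Suc n)))"

definition dens_dist :: "nat set \<Rightarrow> nat set \<Rightarrow> ereal" where
  "dens_dist A B = lower_density ((A - B) \<union> (B - A))"

end

theory Submission
  imports Defs "HOL-Library.Nat_Bijection"
begin

definition PRf :: "nat \<Rightarrow> (nat list \<Rightarrow> nat) \<Rightarrow> bool" where
  "PRf n F \<longleftrightarrow> (\<exists>f. PR n f \<and> (\<forall>xs. length xs = n \<longrightarrow> f xs = F xs))"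

lemma len1: "length xs = 1 \<longleftrightarrow> (\<exists>a. xs = [a])"
  by (cases xs) auto
lemma len2: "length xs = 2 \<longleftrightarrow> (\<exists>a b. xs = [a,b])"
  by (auto simp: numeral_2_eq_2 length_Suc_conv)
lemma len3: "length xs = 3 \<longleftrightarrow> (\<exists>a b c. xs = [a,b,c])"
  by (auto simp: numeral_3_eq_3 length_Suc_conv)
lemma len4: "length xs = 4 \<longleftrightarrow> (\<exists>a b c d. xs = [a,b,c,d])"
  by (auto simp: eval_nat_numeral length_Suc_conv)

lemma PRf_cong:
  assumes "PRf n F" "\<And>xs. length xs = n \<Longrightarrow> F xs = G xs"
  shows "PRf n G"
  using assms unfolding PRf_def by metis

lemma PRf_zero: "PRf n (\<lambda>_. 0)"
  unfolding PRf_def by (blast intro: PR.intros)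

lemma PRf_proj: "i < n \<Longrightarrow> PRf n (\<lambda>xs. xs ! i)"
  unfolding PRf_def by (blast intro: PR.intros)

lemma PRf_succ1: "PRf 1 (\<lambda>xs. Suc (xs ! 0))"
  unfolding PRf_def
  apply (rule exI[of _ "\<lambda>xs. Suc (hd xs)"])
  using PR.pr_succ by (auto simp: length_Suc_conv)

lemma PRf_comp:
  assumes F: "PRf m F" and len: "length Gs = m" and G: "\<forall>G\<in>set Gs. PRf n G"
  shows "PRf n (\<lambda>xs. F (map (\<lambda>G. G xs) Gs))"
proof -
  obtain f where f: "PR m f" "\<And>xs. length xs = m \<Longrightarrow> f xs = F xs"
    using F unfolding PRf_def by blast
  have "\<forall>G\<in>set Gs. \<exists>g. PR n g \<and> (\<forall>xs. length xs = n \<longrightarrow> g xs = G xs)"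
    using G unfolding PRf_def by blast
  then obtain c where c: "\<And>G. G\<in>set Gs \<Longrightarrow> PR n (c G) \<and> (\<forall>xs. length xs = n \<longrightarrow> c G xs = G xs)"
    by metis
  define gs where "gs = map c Gs"
  have "PR n (\<lambda>xs. f (map (\<lambda>g. g xs) gs))"
    by (rule PR.pr_comp[OF f(1)]) (use c len in \<open>auto simp: gs_def\<close>)
  moreover have "\<forall>xs. length xs = n \<longrightarrow> f (map (\<lambda>g. g xs) gs) = F (map (\<lambda>G. G xs) Gs)"
    using c len by (auto simp: gs_def f(2) intro!: arg_cong[where f=F])
  ultimately show ?thesis unfolding PRf_def by blast
qed

lemma PRf_rec:
  assumes G: "PRf n G" and H: "PRf (Suc (Suc n)) H"
  shows "PRf (Suc n) (\<lambda>xs. rec_nat (G (tl xs)) (\<lambda>y r. H (y # r # tl xs)) (hd xs))"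
proof -
  obtain g where g: "PR n g" "\<And>xs. length xs = n \<Longrightarrow> g xs = G xs"
    using G unfolding PRf_def by blast
  obtain h where h: "PR (Suc (Suc n)) h" "\<And>xs. length xs = Suc (Suc n) \<Longrightarrow> h xs = H xs"
    using H unfolding PRf_def by blast
  have "rec_nat (g (tl xs)) (\<lambda>y r. h (y # r # tl xs)) k = rec_nat (G (tl xs)) (\<lambda>y r. H (y # r # tl xs)) k"
    if "length xs = Suc n" for xs k
    using that by (induction k) (auto simp: g(2) h(2))
  then show ?thesis unfolding PRf_def
    by (intro exI[of _ "\<lambda>xs. rec_nat (g (tl xs)) (\<lambda>y r. h (y # r # tl xs)) (hd xs)"])
       (auto intro: PR.pr_rec g h)
qed

lemma PRf_comp1:
  assumes "PRf 1 (\<lambda>ys. f (ys!0))" "PRf n A"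
  shows "PRf n (\<lambda>xs. f (A xs))"
  using PRf_comp[OF assms(1), of "[A]"] assms(2) by simp

lemma PRf_comp2:
  assumes "PRf 2 (\<lambda>ys. f (ys!0) (ys!1))" "PRf n A" "PRf n B"
  shows "PRf n (\<lambda>xs. f (A xs) (B xs))"
  using PRf_comp[OF assms(1), of "[A,B]"] assms(2,3) by simp

lemma PRf_comp3:
  assumes "PRf 3 (\<lambda>ys. f (ys!0) (ys!1) (ys!2))" "PRf n A" "PRf n B" "PRf n C"
  shows "PRf n (\<lambda>xs. f (A xs) (B xs) (C xs))"
  using PRf_comp[OF assms(1), of "[A,B,C]"] assms(2-4) by simp

lemma PRf_Suc: "PRf n A \<Longrightarrow> PRf n (\<lambda>xs. Suc (A xs))"
  using PRf_comp1[OF PRf_succ1] .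

lemma PRf_const: "PRf n (\<lambda>_. c)"
  by (induction c) (auto intro: PRf_zero PRf_Suc)

lemma PRf_cond0: "PRf 3 (\<lambda>ys. if ys!0 = 0 then ys!1 else ys!2)"
proof -
  have "PRf (Suc 2) (\<lambda>xs. rec_nat ((\<lambda>zs. zs!0) (tl xs)) (\<lambda>y r. (\<lambda>zs. zs!3) (y # r # tl xs)) (hd xs))"
    by (rule PRf_rec) (auto intro: PRf_proj)
  then have "PRf 3 (\<lambda>xs. rec_nat (tl xs ! 0) (\<lambda>y r. (y # r # tl xs) ! 3) (hd xs))"
    by (simp add: numeral_3_eq_3)
  then show ?thesis
    by (rule PRf_cong) (auto simp: len3 gr0_conv_Suc)
qed

lemma PRf_if0:
  assumes "PRf n A" "PRf n B" "PRf n C"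
  shows "PRf n (\<lambda>xs. if A xs = 0 then B xs else C xs)"
  using PRf_comp3[OF PRf_cond0 assms] .

lemma map_nth_drop: "length xs = m \<Longrightarrow> map ((!) xs) [k..<m] = drop k xs"
  by (rule nth_equalityI) auto

lemma map_proj_upt: "length xs = n \<Longrightarrow> map (\<lambda>G. G xs) (map (\<lambda>i xs. xs ! i) [0..<n]) = xs"
  by (simp add: map_nth_drop o_def)

lemma PRf_recK:
  assumes G: "PRf n G" and H: "PRf (Suc (Suc n)) (\<lambda>zs. H (zs!0) (zs!1) (drop 2 zs))"
    and K: "PRf n K"
  shows "PRf n (\<lambda>xs. rec_nat (G xs) (\<lambda>y r. H y r xs) (K xs))"
proof -
  have R: "PRf (Suc n) (\<lambda>xs. rec_nat (G (tl xs)) (\<lambda>y r. (\<lambda>zs. H (zs!0) (zs!1) (drop 2 zs)) (y # r # tl xs)) (hd xs))"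
    by (rule PRf_rec[OF G H])
  have "PRf n (\<lambda>xs. (\<lambda>xs. rec_nat (G (tl xs)) (\<lambda>y r. (\<lambda>zs. H (zs!0) (zs!1) (drop 2 zs)) (y # r # tl xs)) (hd xs))
           (map (\<lambda>G. G xs) (K # map (\<lambda>i xs. xs ! i) [0..<n])))"
    by (rule PRf_comp[OF R]) (auto intro: K PRf_proj)
  then show ?thesis
    by (rule PRf_cong) (simp add: map_nth_drop o_def)
qed

lemma PRf_drop2:
  assumes b: "PRf n B" shows "PRf (Suc (Suc n)) (\<lambda>zs. B (drop 2 zs))"
proof -
  have "PRf (Suc (Suc n)) (\<lambda>zs. B (map (\<lambda>G. G zs) (map (\<lambda>i xs. xs ! i) [2..<Suc (Suc n)])))"
    by (rule PRf_comp[OF b]) (auto intro!: PRf_proj)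
  then show ?thesis
    by (rule PRf_cong) (simp add: o_def map_nth_drop del: upt_Suc)
qed

lemma PRf_add: "PRf n A \<Longrightarrow> PRf n B \<Longrightarrow> PRf n (\<lambda>xs. A xs + B xs)"
proof -
  assume a: "PRf n A" and b: "PRf n B"
  have "PRf n (\<lambda>xs. rec_nat (B xs) (\<lambda>y r. Suc r) (A xs))"
    by (rule PRf_recK[OF b _ a]) (auto intro!: PRf_Suc PRf_proj)
  moreover have "rec_nat b (\<lambda>y r. Suc r) a = a + b" for a b :: nat
    by (induction a) auto
  ultimately show ?thesis by simp
qed

lemma PRf_pred: "PRf n A \<Longrightarrow> PRf n (\<lambda>xs. A xs - 1)"
proof -
  assume a: "PRf n A"
  have "PRf n (\<lambda>xs. rec_nat 0 (\<lambda>y r. y) (A xs))"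
    by (rule PRf_recK[OF PRf_zero _ a]) (rule PRf_proj, simp)
  moreover have "rec_nat 0 (\<lambda>y r. y) a = a - 1" for a :: nat
    by (cases a) auto
  ultimately show ?thesis by simp
qed

lemma PRf_minus: "PRf n A \<Longrightarrow> PRf n B \<Longrightarrow> PRf n (\<lambda>xs. A xs - B xs)"
proof -
  assume a: "PRf n A" and b: "PRf n B"
  have "PRf n (\<lambda>xs. rec_nat (A xs) (\<lambda>y r. r - 1) (B xs))"
    by (rule PRf_recK[OF a _ b]) (rule PRf_pred, rule PRf_proj, simp)
  moreover have "rec_nat a (\<lambda>y r. r - 1) b = a - b" for a b :: nat
    by (induction b) auto
  ultimately show ?thesis by simp
qed

lemma PRf_mult: "PRf n A \<Longrightarrow> PRf n B \<Longrightarrow> PRf n (\<lambda>xs. A xs * B xs)"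
proof -
  assume a: "PRf n A" and b: "PRf n B"
  have "PRf n (\<lambda>xs. rec_nat 0 (\<lambda>y r. r + B xs) (A xs))"
    by (rule PRf_recK[OF PRf_zero _ a])
       (auto intro!: PRf_add PRf_proj PRf_drop2[OF b])
  moreover have "rec_nat 0 (\<lambda>y r. r + b) a = a * b" for a b :: nat
    by (induction a) auto
  ultimately show ?thesis by simp
qed

lemma PRf_lift0:
  assumes b: "PRf (Suc n) P" shows "PRf (Suc (Suc n)) (\<lambda>zs. P (zs!0 # drop 2 zs))"
proof -
  have "PRf (Suc (Suc n)) (\<lambda>zs. P (map (\<lambda>G. G zs) (map (\<lambda>i xs. xs ! i) (0 # [2..<Suc (Suc n)]))))"
    by (rule PRf_comp[OF b]) (auto intro!: PRf_proj)
  then show ?thesis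
    by (rule PRf_cong) (simp add: o_def map_nth_drop del: upt_Suc)
qed

definition PRP :: "nat \<Rightarrow> (nat list \<Rightarrow> bool) \<Rightarrow> bool" where
  "PRP n P \<longleftrightarrow> PRf n (\<lambda>xs. if P xs then 0 else 1)"

lemma PRf_ifP:
  assumes "PRP n P" "PRf n B" "PRf n C"
  shows "PRf n (\<lambda>xs. if P xs then B xs else C xs)"
  by (rule PRf_cong[OF PRf_if0[OF assms[unfolded PRP_def]]]) simp

lemma PRP_eq: "PRf n A \<Longrightarrow> PRf n B \<Longrightarrow> PRP n (\<lambda>xs. A xs = B xs)"
  unfolding PRP_def
  by (rule PRf_cong[OF PRf_if0[OF PRf_add[OF PRf_minus PRf_minus] PRf_const PRf_const, of n A B B A 0 1]]) auto

lemma PRP_le: "PRf n A \<Longrightarrow> PRf n B \<Longrightarrow> PRP n (\<lambda>xs. A xs \<le> B xs)"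
  unfolding PRP_def
  by (rule PRf_cong[OF PRf_if0[OF PRf_minus PRf_const PRf_const, of n A B 0 1]]) auto

lemma PRP_less: "PRf n A \<Longrightarrow> PRf n B \<Longrightarrow> PRP n (\<lambda>xs. A xs < B xs)"
  unfolding PRP_def
  by (rule PRf_cong[OF PRf_if0[OF PRf_minus PRf_const PRf_const, of n B A 1 0]]) auto

lemma PRP_not: "PRP n P \<Longrightarrow> PRP n (\<lambda>xs. \<not> P xs)"
  unfolding PRP_def
  by (rule PRf_cong[OF PRf_if0[OF _ PRf_const PRf_const, of n "\<lambda>xs. if P xs then 0 else 1" 1 0]]) auto

lemma PRP_conj: "PRP n P \<Longrightarrow> PRP n Q \<Longrightarrow> PRP n (\<lambda>xs. P xs \<and> Q xs)"
  unfolding PRP_def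
  by (rule PRf_cong[OF PRf_if0[OF _ _ PRf_const, of n "\<lambda>xs. if P xs then 0 else 1" "\<lambda>xs. if Q xs then 0 else 1" 1]]) auto

lemma PRP_disj: "PRP n P \<Longrightarrow> PRP n Q \<Longrightarrow> PRP n (\<lambda>xs. P xs \<or> Q xs)"
  using PRP_not[OF PRP_conj[OF PRP_not PRP_not], of n P Q] by simp

lemma PRP_imp: "PRP n P \<Longrightarrow> PRP n Q \<Longrightarrow> PRP n (\<lambda>xs. P xs \<longrightarrow> Q xs)"
  using PRP_disj[OF PRP_not, of n P Q] by simp

lemma PRP_True: "PRP n (\<lambda>xs. True)" unfolding PRP_def by (simp add: PRf_const)
lemma PRP_False: "PRP n (\<lambda>xs. False)" unfolding PRP_def by (simp add: PRf_const)

lemma PRP_bex: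
  assumes P: "PRP (Suc n) (\<lambda>zs. P (zs!0) (tl zs))" and K: "PRf n K"
  shows "PRP n (\<lambda>xs. \<exists>y<K xs. P y xs)"
proof -
  have P': "PRP (Suc (Suc n)) (\<lambda>zs. P (zs!0) (drop 2 zs))"
    using PRf_lift0[OF P[unfolded PRP_def]] unfolding PRP_def by (simp add: drop_Suc)
  have R: "PRf n (\<lambda>xs. rec_nat 1 (\<lambda>y r. if P y xs then 0 else r) (K xs))"
    by (rule PRf_recK[OF PRf_const _ K]) (rule PRf_ifP[OF P' PRf_const PRf_proj], simp)
  have E: "rec_nat 1 (\<lambda>y r. if P y xs then 0 else r) k = (if \<exists>y<k. P y xs then 0 else 1)" for k xs
    by (induction k) (auto simp: less_Suc_eq)
  show ?thesis unfolding PRP_def by (rule PRf_cong[OF R]) (rule E)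
qed

lemma PRP_ball:
  assumes P: "PRP (Suc n) (\<lambda>zs. P (zs!0) (tl zs))" and K: "PRf n K"
  shows "PRP n (\<lambda>xs. \<forall>y<K xs. P y xs)"
  using PRP_not[OF PRP_bex[OF PRP_not[OF P] K]] by simp

lemma PRf_bsum:
  assumes F: "PRf (Suc n) (\<lambda>zs. F (zs!0) (tl zs))" and K: "PRf n K"
  shows "PRf n (\<lambda>xs. \<Sum>y<K xs. F y xs)"
proof -
  have F': "PRf (Suc (Suc n)) (\<lambda>zs. F (zs!0) (drop 2 zs))"
    using PRf_lift0[OF F] by (simp add: drop_Suc)
  have "PRf n (\<lambda>xs. rec_nat 0 (\<lambda>y r. r + F y xs) (K xs))"
    by (rule PRf_recK[OF PRf_const _ K]) (rule PRf_add[OF PRf_proj F'], simp)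
  moreover have "rec_nat 0 (\<lambda>y r. r + F y xs) k = (\<Sum>y<k. F y xs)" for k xs
    by (induction k) auto
  ultimately show ?thesis by simp
qed

datatype tm = Z | S | P nat | C tm "tm list" | R tm tm

fun hd' :: "nat list \<Rightarrow> nat" where
  "hd' [] = 0" | "hd' (x # xs) = x"

definition nth' :: "nat list \<Rightarrow> nat \<Rightarrow> nat" where
  "nth' xs i = hd' (drop i xs)"

fun ev :: "tm \<Rightarrow> nat list \<Rightarrow> nat" where
  "ev Z xs = 0"
| "ev S xs = Suc (hd' xs)"
| "ev (P i) xs = nth' xs i"
| "ev (C f gs) xs = ev f (map (\<lambda>g. ev g xs) gs)"
| "ev (R g h) xs = rec_nat (ev g (tl xs)) (\<lambda>y r. ev h (y # r # tl xs)) (hd' xs)"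

lemma hd'_hd: "xs \<noteq> [] \<Longrightarrow> hd' xs = hd xs"
  by (cases xs) auto

lemma nth'_nth: "i < length xs \<Longrightarrow> nth' xs i = xs ! i"
  unfolding nth'_def by (simp add: hd_drop_conv_nth hd'_hd)

lemma PR_tm: "PR n f \<Longrightarrow> \<exists>t. \<forall>xs. length xs = n \<longrightarrow> ev t xs = f xs"
proof (induction rule: PR.induct)
  case (pr_zero n)
  then show ?case by (intro exI[of _ Z]) auto
next
  case pr_succ
  then show ?case by (intro exI[of _ S]) (auto simp: length_Suc_conv)
next
  case (pr_proj i n)
  then show ?case by (intro exI[of _ "P i"]) (auto simp: nth'_nth)
next
  case (pr_comp m f gs n)
  obtain tf where tf: "\<And>xs. length xs = m \<Longrightarrow> ev tf xs = f xs" using pr_comp by blast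
  have "\<forall>g\<in>set gs. \<exists>t. \<forall>xs. length xs = n \<longrightarrow> ev t xs = g xs" using pr_comp by blast
  then obtain c where c: "\<And>g xs. g\<in>set gs \<Longrightarrow> length xs = n \<Longrightarrow> ev (c g) xs = g xs" by metis
  show ?case
    by (intro exI[of _ "C tf (map c gs)"]) (auto simp: o_def c tf pr_comp(2) intro!: arg_cong[where f=f] cong: map_cong)
next
  case (pr_rec n g h)
  obtain tg where tg: "\<And>xs. length xs = n \<Longrightarrow> ev tg xs = g xs" using pr_rec by blast
  obtain th where th: "\<And>xs. length xs = Suc (Suc n) \<Longrightarrow> ev th xs = h xs" using pr_rec by blast
  have "rec_nat (ev tg (tl xs)) (\<lambda>y r. ev th (y # r # tl xs)) k = rec_nat (g (tl xs)) (\<lambda>y r. h (y # r # tl xs)) k"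
    if "length xs = Suc n" for xs k
    using that by (induction k) (auto simp: tg th)
  then show ?case
    by (intro exI[of _ "R tg th"]) (auto simp: length_Suc_conv)
qed

datatype frame = CW tm "tm list" "nat list" "nat list" | RW tm nat "nat list"
datatype mode = Ev tm "nat list" | Rt nat

fun step :: "frame list \<times> mode \<Rightarrow> frame list \<times> mode" where
  "step (K, Ev Z xs) = (K, Rt 0)"
| "step (K, Ev S xs) = (K, Rt (Suc (hd' xs)))"
| "step (K, Ev (P i) xs) = (K, Rt (nth' xs i))"
| "step (K, Ev (C f gs) xs) = (case rev gs of [] \<Rightarrow> (K, Ev f []) | g # rest \<Rightarrow> (CW f rest xs [] # K, Ev g xs))"
| "step (K, Ev (R g h) xs) = (case hd' xs of 0 \<Rightarrow> (K, Ev g (tl xs))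
      | Suc m \<Rightarrow> (RW h m (tl xs) # K, Ev (R g h) (m # tl xs)))"
| "step (CW f rest xs acc # K, Rt v) = (case rest of [] \<Rightarrow> (K, Ev f (v # acc))
      | g # rest' \<Rightarrow> (CW f rest' xs (v # acc) # K, Ev g xs))"
| "step (RW h m ys # K, Rt v) = (K, Ev h (m # v # ys))"
| "step ([], Rt v) = ([], Rt v)"

definition reach :: "frame list \<times> mode \<Rightarrow> frame list \<times> mode \<Rightarrow> bool" where
  "reach c d \<longleftrightarrow> (\<exists>k. (step ^^ k) c = d)"

lemma reach_refl: "reach c c"
  unfolding reach_def by (metis funpow_0)

lemma reach_step: "reach (step c) d \<Longrightarrow> reach c d"
  unfolding reach_def by (metis funpow_Suc_right o_apply)

lemma reach_trans: "reach c d \<Longrightarrow> reach d e \<Longrightarrow> reach c e"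
  unfolding reach_def by (metis funpow_add o_apply)

lemma comp_loop:
  assumes IH: "\<And>g K. g \<in> set rest \<Longrightarrow> reach (K, Ev g xs) (K, Rt (ev g xs))"
  shows "reach (CW f rest xs acc # K, Rt v) (K, Ev f (rev (map (\<lambda>g. ev g xs) rest) @ v # acc))"
  using IH
proof (induction rest arbitrary: acc v)
  case Nil
  show ?case by (rule reach_step) (simp add: reach_refl)
next
  case (Cons g rest)
  have "reach (CW f rest xs (v # acc) # K, Ev g xs) (CW f rest xs (v # acc) # K, Rt (ev g xs))"
    using Cons.prems by auto
  moreover have "reach (CW f rest xs (v # acc) # K, Rt (ev g xs))
      (K, Ev f (rev (map (\<lambda>g. ev g xs) rest) @ ev g xs # v # acc))"
    using Cons by auto
  ultimately have "reach (CW f rest xs (v # acc) # K, Ev g xs)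
      (K, Ev f (rev (map (\<lambda>g. ev g xs) rest) @ ev g xs # v # acc))" by (rule reach_trans)
  then show ?case by (rule_tac reach_step) simp
qed

lemma machine_correct: "reach (K, Ev t xs) (K, Rt (ev t xs))"
proof (induction t arbitrary: xs K)
  case Z
  show ?case by (rule reach_step) (simp add: reach_refl)
next
  case S
  show ?case by (rule reach_step) (simp add: reach_refl)
next
  case (P i)
  show ?case by (rule reach_step) (simp add: reach_refl)
next
  case (C f gs)
  show ?case
  proof (cases "rev gs")
    case Nil
    then have "gs = []" by simp
    then show ?thesis using C.IH(1)[of K "[]"] by (rule_tac reach_step) simp
  next
    case (Cons g rest)
    have gs: "gs = rev rest @ [g]" using Cons by (metis rev_rev_ident rev.simps(2))
    have "reach (CW f rest xs [] # K, Ev g xs) (CW f rest xs [] # K, Rt (ev g xs))"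
      using C gs by auto
    moreover have "reach (CW f rest xs [] # K, Rt (ev g xs)) (K, Ev f (rev (map (\<lambda>g. ev g xs) rest) @ [ev g xs]))"
      by (rule comp_loop) (use C gs in auto)
    moreover have "reach (K, Ev f (rev (map (\<lambda>g. ev g xs) rest) @ [ev g xs])) (K, Rt (ev (C f gs) xs))"
      using C by (simp add: gs rev_map)
    ultimately have "reach (CW f rest xs [] # K, Ev g xs) (K, Rt (ev (C f gs) xs))"
      by (blast intro: reach_trans)
    then show ?thesis using Cons by (rule_tac reach_step) simp
  qed
next
  case (R g h)
  have "reach (K, Ev (R g h) (n # ys)) (K, Rt (ev (R g h) (n # ys)))" for n ys K
  proof (induction n arbitrary: K)
    case 0
    show ?case using R.IH(1) by (rule_tac reach_step) simp
  next
    case (Suc m)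
    have "reach (RW h m ys # K, Ev (R g h) (m # ys)) (RW h m ys # K, Rt (ev (R g h) (m # ys)))"
      using Suc by blast
    moreover have "reach (RW h m ys # K, Rt (ev (R g h) (m # ys))) (K, Rt (ev (R g h) (Suc m # ys)))"
      by (rule reach_step) (use R.IH(2) in simp)
    ultimately have "reach (RW h m ys # K, Ev (R g h) (m # ys)) (K, Rt (ev (R g h) (Suc m # ys)))"
      by (rule reach_trans)
    then show ?case by (rule_tac reach_step) simp
  qed
  moreover have "reach (K, Ev (R g h) []) (K, Rt (ev (R g h) []))"
    using R.IH(1) by (rule_tac reach_step) simp
  ultimately show ?case by (cases xs) auto
qed

definition pe :: "nat \<Rightarrow> nat \<Rightarrow> nat" where "pe a b = prod_encode (a, b)"
definition p1 :: "nat \<Rightarrow> nat" where "p1 z = fst (prod_decode z)"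
definition p2 :: "nat \<Rightarrow> nat" where "p2 z = snd (prod_decode z)"

lemma p1_pe[simp]: "p1 (pe a b) = a" and p2_pe[simp]: "p2 (pe a b) = b"
  by (simp_all add: p1_def p2_def pe_def)

lemma pe_eq[simp]: "pe a b = pe c d \<longleftrightarrow> a = c \<and> b = d"
  by (simp add: pe_def)

lemma prod_decode_0: "prod_decode 0 = (0, 0)"
  by (simp add: prod_decode_def prod_decode_aux.simps)

lemma p1_0[simp]: "p1 0 = 0" and p2_0[simp]: "p2 0 = 0"
  by (simp_all add: p1_def p2_def prod_decode_0)

definition ccons :: "nat \<Rightarrow> nat \<Rightarrow> nat" where "ccons a l = Suc (pe a l)"
definition chd :: "nat \<Rightarrow> nat" where "chd l = p1 (l - 1)"
definition ctl :: "nat \<Rightarrow> nat" where "ctl l = p2 (l - 1)"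

lemma chd_ccons[simp]: "chd (ccons a l) = a" and ctl_ccons[simp]: "ctl (ccons a l) = l"
  and ccons_ne[simp]: "ccons a l \<noteq> 0" and chd_0[simp]: "chd 0 = 0" and ctl_0[simp]: "ctl 0 = 0"
  by (simp_all add: ccons_def chd_def ctl_def)

fun clist :: "nat list \<Rightarrow> nat" where
  "clist [] = 0" | "clist (x # xs) = ccons x (clist xs)"

definition cnth :: "nat \<Rightarrow> nat \<Rightarrow> nat" where "cnth l i = chd ((ctl ^^ i) l)"

lemma clist_drop: "(ctl ^^ i) (clist xs) = clist (drop i xs)"
proof (induction i arbitrary: xs)
  case 0 then show ?case by simp
next
  case (Suc i)
  show ?case
  proof (cases xs)
    case Nil
    have "(ctl ^^ j) 0 = 0" for j by (induction j) auto
    then show ?thesis using Nil by simp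
  next
    case (Cons a ys) then show ?thesis using Suc by (simp add: funpow_Suc_right del: funpow.simps)
  qed
qed

lemma chd_clist: "chd (clist xs) = hd' xs"
  by (cases xs) auto

lemma cnth_clist[simp]: "cnth (clist xs) i = nth' xs i"
  by (simp add: cnth_def nth'_def clist_drop chd_clist)

fun ct :: "tm \<Rightarrow> nat" where
  "ct Z = pe 0 0"
| "ct S = pe 1 0"
| "ct (P i) = pe 2 i"
| "ct (C f gs) = pe 3 (pe (ct f) (clist (map ct (rev gs))))"
| "ct (R g h) = pe 4 (pe (ct g) (ct h))"

fun cf :: "frame \<Rightarrow> nat" where
  "cf (CW f rest xs acc) = pe 0 (pe (ct f) (pe (clist (map ct rest)) (pe (clist xs) (clist acc))))"
| "cf (RW h m ys) = pe 1 (pe (ct h) (pe m (clist ys)))"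

fun cm :: "mode \<Rightarrow> nat" where
  "cm (Ev t xs) = pe 0 (pe (ct t) (clist xs))"
| "cm (Rt v) = pe 1 v"

fun cc :: "frame list \<times> mode \<Rightarrow> nat" where
  "cc (K, M) = pe (clist (map cf K)) (cm M)"

definition stepN :: "nat \<Rightarrow> nat" where
  "stepN z = (let K = p1 z; M = p2 z in
    if p1 M = 0 then
      (let T = p1 (p2 M); XS = p2 (p2 M); tag = p1 T; arg = p2 T in
       if tag = 0 then pe K (pe 1 0)
       else if tag = 1 then pe K (pe 1 (Suc (chd XS)))
       else if tag = 2 then pe K (pe 1 (cnth XS arg))
       else if tag = 3 then
         (if p2 arg = 0 then pe K (pe 0 (pe (p1 arg) 0))
          else pe (ccons (pe 0 (pe (p1 arg) (pe (ctl (p2 arg)) (pe XS 0)))) K) (pe 0 (pe (chd (p2 arg)) XS)))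
       else
         (if chd XS = 0 then pe K (pe 0 (pe (p1 arg) (ctl XS)))
          else pe (ccons (pe 1 (pe (p2 arg) (pe (chd XS - 1) (ctl XS)))) K)
                  (pe 0 (pe T (ccons (chd XS - 1) (ctl XS))))))
    else
      (let v = p2 M in
       if K = 0 then z
       else (let FR = chd K; K' = ctl K; fa = p2 FR in
         if p1 FR = 0 then
           (if p1 (p2 fa) = 0 then pe K' (pe 0 (pe (p1 fa) (ccons v (p2 (p2 (p2 fa))))))
            else pe (ccons (pe 0 (pe (p1 fa) (pe (ctl (p1 (p2 fa))) (pe (p1 (p2 (p2 fa))) (ccons v (p2 (p2 (p2 fa)))))))) K')
                    (pe 0 (pe (chd (p1 (p2 fa))) (p1 (p2 (p2 fa))))))
         else pe K' (pe 0 (pe (p1 fa) (ccons (p1 (p2 fa)) (ccons v (p2 (p2 fa)))))))))"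

lemma clist_eq0: "clist xs = 0 \<longleftrightarrow> xs = []"
  by (cases xs) auto

lemma stepN_correct: "stepN (cc c) = cc (step c)"
proof (cases c rule: step.cases)
  case (4 K f gs xs)
  then show ?thesis
    by (cases "rev gs") (simp_all add: stepN_def Let_def)
next
  case (5 K g h xs)
  then show ?thesis
    by (cases xs) (simp_all add: stepN_def Let_def split: nat.splits)
next
  case (6 f rest xs acc K v)
  then show ?thesis
    by (cases rest) (simp_all add: stepN_def Let_def)
qed (simp_all add: stepN_def Let_def chd_clist)

lemma stepN_iter: "(stepN ^^ k) (cc c) = cc ((step ^^ k) c)"
  by (induction k) (auto simp: stepN_correct)

definition U :: "nat \<Rightarrow> nat \<Rightarrow> nat \<Rightarrow> nat" where
  "U e x y = (if (stepN ^^ p2 y) (pe 0 (pe 0 (pe e (ccons x (ccons (p1 y) 0))))) = pe 0 (pe 1 0) then 0 else 1)"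

lemma halt_fix: "(step ^^ k) ([], Rt v) = ([], Rt v)"
  by (induction k) auto

lemma U_universal:
  assumes "PR 2 f"
  shows "\<exists>e. \<forall>x. (\<exists>y. f [x, y] = 0) \<longleftrightarrow> (\<exists>y. U e x y = 0)"
proof -
  obtain t where t: "\<And>xs. length xs = 2 \<Longrightarrow> ev t xs = f xs" using PR_tm[OF assms] by blast
  have init: "pe 0 (pe 0 (pe (ct t) (ccons x (ccons w 0)))) = cc ([], Ev t [x, w])" for x w
    by simp
  have key: "(\<exists>s. (step ^^ s) ([], Ev t [x, w]) = ([], Rt 0)) \<longleftrightarrow> f [x, w] = 0" for x w
  proof -
    obtain k where k: "(step ^^ k) ([], Ev t [x, w]) = ([], Rt (ev t [x, w]))"
      using machine_correct[of "[]" t "[x,w]"] unfolding reach_def by blast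
    show ?thesis
    proof
      assume "\<exists>s. (step ^^ s) ([], Ev t [x, w]) = ([], Rt 0)"
      then obtain s where s: "(step ^^ s) ([], Ev t [x, w]) = ([], Rt 0)" by blast
      have "(step ^^ (s + k)) ([], Ev t [x, w]) = ([], Rt (ev t [x, w]))"
        by (simp add: funpow_add k halt_fix)
      moreover have "(step ^^ (k + s)) ([], Ev t [x, w]) = ([], Rt 0)"
        by (simp add: funpow_add s halt_fix)
      ultimately have "ev t [x, w] = 0" by (simp add: add.commute)
      then show "f [x, w] = 0" using t[of "[x,w]"] by simp
    next
      assume "f [x, w] = 0"
      then show "\<exists>s. (step ^^ s) ([], Ev t [x, w]) = ([], Rt 0)" using k t[of "[x,w]"] by auto
    qed
  qed
  have "(\<exists>y. f [x, y] = 0) \<longleftrightarrow> (\<exists>y. U (ct t) x y = 0)" for x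
  proof
    assume "\<exists>y. f [x, y] = 0"
    then obtain w where "f [x, w] = 0" by blast
    then obtain s where s: "(step ^^ s) ([], Ev t [x, w]) = ([], Rt 0)" using key by blast
    have "U (ct t) x (pe w s) = 0"
      unfolding U_def by (simp only: p1_pe p2_pe init stepN_iter s) simp
    then show "\<exists>y. U (ct t) x y = 0" by blast
  next
    assume "\<exists>y. U (ct t) x y = 0"
    then obtain y where y: "U (ct t) x y = 0" by blast
    let ?w = "p1 y" and ?s = "p2 y"
    have "cc ((step ^^ ?s) ([], Ev t [x, ?w])) = pe 0 (pe 1 0)"
      using y unfolding U_def by (simp only: init stepN_iter) (simp split: if_splits)
    moreover obtain K M where "(step ^^ ?s) ([], Ev t [x, ?w]) = (K, M)" by fastforce
    ultimately have "(step ^^ ?s) ([], Ev t [x, ?w]) = ([], Rt 0)"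
      by (cases M) (auto simp: clist_eq0)
    then show "\<exists>y. f [x, y] = 0" using key by blast
  qed
  then show ?thesis by blast
qed

lemma PRP_bex2:
  assumes "PRP (Suc n) Q" "\<And>y xs. length xs = n \<Longrightarrow> Q (y # xs) = Pp y xs" "PRf n K"
  shows "PRP n (\<lambda>xs. \<exists>y<K xs. Pp y xs)"
proof -
  have "PRP (Suc n) (\<lambda>zs. Pp (zs!0) (tl zs))"
    using assms(1) unfolding PRP_def
    by (rule PRf_cong) (auto simp: length_Suc_conv assms(2))
  then show ?thesis using PRP_bex assms(3) by blast
qed

lemma PRf_bsum2:
  assumes "PRf (Suc n) G" "\<And>y xs. length xs = n \<Longrightarrow> G (y # xs) = F y xs" "PRf n K"
  shows "PRf n (\<lambda>xs. \<Sum>y<K xs. F y xs)"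
proof -
  have "PRf (Suc n) (\<lambda>zs. F (zs!0) (tl zs))"
    using assms(1)
    by (rule PRf_cong) (auto simp: length_Suc_conv assms(2))
  then show ?thesis using PRf_bsum assms(3) by blast
qed

lemma PRf_triangle1: "PRf 1 (\<lambda>zs. triangle (zs!0))"
proof -
  have "PRf 1 (\<lambda>zs. rec_nat 0 (\<lambda>y r. r + Suc y) (zs!0))"
    by (rule PRf_recK[OF PRf_const _ PRf_proj]) (auto intro!: PRf_add PRf_Suc PRf_proj)
  moreover have "rec_nat 0 (\<lambda>y r. r + Suc y) k = triangle k" for k
    by (induction k) auto
  ultimately show ?thesis by simp
qed

lemma PRf_triangle: "PRf n A \<Longrightarrow> PRf n (\<lambda>xs. triangle (A xs))"
  by (rule PRf_comp1[OF PRf_triangle1])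

lemma PRf_pe2: "PRf 2 (\<lambda>zs. pe (zs!0) (zs!1))"
  unfolding pe_def prod_encode_def
  by (auto intro!: PRf_add PRf_triangle PRf_proj)

lemma PRf_pe: "PRf n A \<Longrightarrow> PRf n B \<Longrightarrow> PRf n (\<lambda>xs. pe (A xs) (B xs))"
  by (rule PRf_comp2[OF PRf_pe2])

lemma p1_sum: "p1 z = (\<Sum>a<Suc z. if \<exists>b<Suc z. pe a b = z then a else 0)"
proof -
  obtain a0 b0 where d: "prod_decode z = (a0, b0)" by fastforce
  have z: "z = pe a0 b0" using d by (metis pe_def prod_decode_inverse)
  have "a0 \<le> z" "b0 \<le> z" using z le_prod_encode_1 le_prod_encode_2 by (auto simp: pe_def)
  then have "(\<exists>b<Suc z. pe a b = z) \<longleftrightarrow> a = a0" for a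
    using z by auto
  then have "(\<Sum>a<Suc z. if \<exists>b<Suc z. pe a b = z then a else 0) = (\<Sum>a<Suc z. if a = a0 then a else 0)"
    by (intro sum.cong) auto
  also have "\<dots> = a0" using \<open>a0 \<le> z\<close> by (simp add: sum.delta')
  finally show ?thesis using d by (simp add: p1_def)
qed

lemma p2_sum: "p2 z = (\<Sum>b<Suc z. if \<exists>a<Suc z. pe a b = z then b else 0)"
proof -
  obtain a0 b0 where d: "prod_decode z = (a0, b0)" by fastforce
  have z: "z = pe a0 b0" using d by (metis pe_def prod_decode_inverse)
  have "a0 \<le> z" "b0 \<le> z" using z le_prod_encode_1 le_prod_encode_2 by (auto simp: pe_def)
  then have "(\<exists>a<Suc z. pe a b = z) \<longleftrightarrow> b = b0" for b
    using z by auto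
  then have "(\<Sum>b<Suc z. if \<exists>a<Suc z. pe a b = z then b else 0) = (\<Sum>b<Suc z. if b = b0 then b else 0)"
    by (intro sum.cong) auto
  also have "\<dots> = b0" using \<open>b0 \<le> z\<close> by (simp add: sum.delta')
  finally show ?thesis using d by (simp add: p2_def)
qed

lemma PRf_p11: "PRf 1 (\<lambda>zs. p1 (zs!0))"
  unfolding p1_sum
  apply (rule PRf_bsum2[where G = "\<lambda>zs. if \<exists>b<Suc (zs!1). pe (zs!0) b = zs!1 then zs!0 else 0"])
    apply (rule PRf_ifP)
      apply (rule PRP_bex2[where Q = "\<lambda>ws. pe (ws!1) (ws!0) = ws!2"])
        apply (auto intro!: PRP_eq PRf_pe PRf_proj PRf_Suc PRf_const)
  done

lemma PRf_p21: "PRf 1 (\<lambda>zs. p2 (zs!0))"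
  unfolding p2_sum
  apply (rule PRf_bsum2[where G = "\<lambda>zs. if \<exists>a<Suc (zs!1). pe a (zs!0) = zs!1 then zs!0 else 0"])
    apply (rule PRf_ifP)
      apply (rule PRP_bex2[where Q = "\<lambda>ws. pe (ws!0) (ws!1) = ws!2"])
        apply (auto intro!: PRP_eq PRf_pe PRf_proj PRf_Suc PRf_const)
  done

lemma PRf_p1: "PRf n A \<Longrightarrow> PRf n (\<lambda>xs. p1 (A xs))"
  by (rule PRf_comp1[OF PRf_p11])
lemma PRf_p2: "PRf n A \<Longrightarrow> PRf n (\<lambda>xs. p2 (A xs))"
  by (rule PRf_comp1[OF PRf_p21])

lemma PRf_ccons: "PRf n A \<Longrightarrow> PRf n B \<Longrightarrow> PRf n (\<lambda>xs. ccons (A xs) (B xs))"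
  unfolding ccons_def by (intro PRf_Suc PRf_pe)
lemma PRf_chd: "PRf n A \<Longrightarrow> PRf n (\<lambda>xs. chd (A xs))"
  unfolding chd_def by (intro PRf_p1 PRf_minus PRf_const)
lemma PRf_ctl: "PRf n A \<Longrightarrow> PRf n (\<lambda>xs. ctl (A xs))"
  unfolding ctl_def by (intro PRf_p2 PRf_minus PRf_const)

lemma PRf_cnth2: "PRf 2 (\<lambda>zs. cnth (zs!0) (zs!1))"
proof -
  have "PRf 2 (\<lambda>zs. chd (rec_nat (zs!0) (\<lambda>y r. ctl r) (zs!1)))"
    by (rule PRf_chd, rule PRf_recK) (auto intro!: PRf_ctl PRf_proj)
  moreover have "rec_nat l (\<lambda>y r. ctl r) k = (ctl ^^ k) l" for l k
    by (induction k) auto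
  ultimately show ?thesis by (simp add: cnth_def)
qed

lemma PRf_cnth: "PRf n A \<Longrightarrow> PRf n B \<Longrightarrow> PRf n (\<lambda>xs. cnth (A xs) (B xs))"
  by (rule PRf_comp2[OF PRf_cnth2])

lemmas prf_intros = PRf_ifP PRP_eq PRf_pe PRf_p1 PRf_p2 PRf_ccons PRf_chd PRf_ctl PRf_cnth
  PRf_Suc PRf_minus PRf_proj PRf_const

lemma PRf_stepN1: "PRf 1 (\<lambda>zs. stepN (zs!0))"
  unfolding stepN_def Let_def
  by (intro prf_intros) simp_all

lemma PRf_stepN: "PRf n A \<Longrightarrow> PRf n (\<lambda>xs. stepN (A xs))"
  by (rule PRf_comp1[OF PRf_stepN1])

lemma PRf_U: "PRf 3 (\<lambda>zs. U (zs!0) (zs!1) (zs!2))"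
proof -
  have "PRf 3 (\<lambda>zs. if rec_nat (pe 0 (pe 0 (pe (zs!0) (ccons (zs!1) (ccons (p1 (zs!2)) 0))))) (\<lambda>y r. stepN r) (p2 (zs!2))
          = pe 0 (pe 1 0) then 0 else 1)"
    by (intro prf_intros PRf_recK PRf_stepN) simp_all
  moreover have "rec_nat l (\<lambda>y r. stepN r) k = (stepN ^^ k) l" for l k
    by (induction k) auto
  ultimately show ?thesis by (simp add: U_def)
qed

definition inI :: "nat \<Rightarrow> nat \<Rightarrow> bool" where
  "inI e z \<longleftrightarrow> 2 ^ e dvd Suc z \<and> \<not> 2 ^ Suc e dvd Suc z"

definition Ce :: "nat \<Rightarrow> nat set" where
  "Ce e = {x. \<exists>y. U e x y = 0}"

definition Aset :: "nat set" where
  "Aset = {x. \<exists>e. inI e x \<and> (\<forall>y\<le>x. inI e y \<longrightarrow> y \<in> Ce e)}"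

lemma inI_le: "inI e z \<Longrightarrow> e \<le> z"
proof -
  assume "inI e z"
  then have "2 ^ e \<le> Suc z" unfolding inI_def by (auto intro: dvd_imp_le)
  moreover have "e < 2 ^ e" by (rule less_exp)
  ultimately show ?thesis by linarith
qed

lemma dvd_bex: "(d::nat) > 0 \<Longrightarrow> d dvd m \<longleftrightarrow> (\<exists>q<Suc m. q * d = m)"
proof
  assume "d > 0" "d dvd m"
  then obtain q where "m = d * q" by blast
  moreover have "q \<le> d * q" using \<open>d > 0\<close> by simp
  ultimately show "\<exists>q<Suc m. q * d = m" by (metis le_imp_less_Suc mult.commute)
next
  assume "\<exists>q<Suc m. q * d = m"
  then show "d dvd m" by (metis dvd_triv_right)
qed

lemma PRf_pow2: "PRf n A \<Longrightarrow> PRf n (\<lambda>xs. 2 ^ (A xs))"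
proof -
  assume a: "PRf n A"
  have "PRf n (\<lambda>xs. rec_nat 1 (\<lambda>y r. r + r) (A xs))"
    by (rule PRf_recK[OF PRf_const _ a]) (auto intro!: PRf_add PRf_proj)
  moreover have "rec_nat 1 (\<lambda>y r. r + r) k = (2::nat) ^ k" for k
    by (induction k) auto
  ultimately show ?thesis by simp
qed

lemma PRP_ball2:
  assumes "PRP (Suc n) Q" "\<And>y xs. length xs = n \<Longrightarrow> Q (y # xs) = Pp y xs" "PRf n K"
  shows "PRP n (\<lambda>xs. \<forall>y<K xs. Pp y xs)"
proof -
  have "PRP (Suc n) (\<lambda>zs. Pp (zs!0) (tl zs))"
    using assms(1) unfolding PRP_def
    by (rule PRf_cong) (auto simp: length_Suc_conv assms(2))
  then show ?thesis using PRP_ball assms(3) by blast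
qed

lemma PRP_inI2: "PRP 2 (\<lambda>zs. inI (zs!0) (zs!1))"
proof -
  have e: "inI e z \<longleftrightarrow> (\<exists>q<Suc (Suc z). q * 2^e = Suc z) \<and> \<not> (\<exists>q<Suc (Suc z). q * 2^(Suc e) = Suc z)" for e z
    unfolding inI_def by (simp add: dvd_bex del: power_Suc)
  show ?thesis
    unfolding e
    apply (rule PRP_conj)
     apply (rule PRP_bex2[where Q = "\<lambda>ws. ws!0 * 2 ^ (ws!1) = Suc (ws!2)"])
       apply (auto intro!: PRP_eq PRf_mult PRf_pow2 PRf_proj PRf_Suc simp: len2)[3]
    apply (rule PRP_not)
    apply (rule PRP_bex2[where Q = "\<lambda>ws. ws!0 * 2 ^ (Suc (ws!1)) = Suc (ws!2)"])
      apply (auto intro!: PRP_eq PRf_mult PRf_pow2 PRf_proj PRf_Suc simp: len2 simp del: power_Suc)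
    done
qed

lemma PRP_inI: "PRf n A \<Longrightarrow> PRf n B \<Longrightarrow> PRP n (\<lambda>xs. inI (A xs) (B xs))"
  using PRf_comp2[where f = "\<lambda>a b. if inI a b then 0 else 1", of n A B] PRP_inI2 unfolding PRP_def by simp

lemma PRf_Ulift: "PRf n A \<Longrightarrow> PRf n B \<Longrightarrow> PRf n Cc \<Longrightarrow> PRf n (\<lambda>xs. U (A xs) (B xs) (Cc xs))"
  by (rule PRf_comp3[OF PRf_U])

lemma finite_choice_bound:
  fixes n :: nat and Rr :: "nat \<Rightarrow> nat \<Rightarrow> bool" shows "(\<forall>y<n. Q y \<longrightarrow> (\<exists>w. Rr y w)) \<Longrightarrow> \<exists>W. \<forall>y<n. Q y \<longrightarrow> (\<exists>w<W. Rr y w)"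
proof (induction n)
  case 0 then show ?case by auto
next
  case (Suc n)
  then obtain W where W: "\<forall>y<n. Q y \<longrightarrow> (\<exists>w<W. Rr y w)" by auto
  show ?case
  proof (cases "Q n")
    case True
    then obtain w0 where "Rr n w0" using Suc.prems by auto
    then show ?thesis using W
      by (intro exI[of _ "max W (Suc w0)"]) (auto simp: less_Suc_eq less_max_iff_disj)
  next
    case False
    then show ?thesis using W by (intro exI[of _ W]) (auto simp: less_Suc_eq)
  qed
qed

lemma Aset_alt: "x \<in> Aset \<longleftrightarrow> (\<exists>W. \<exists>e<Suc x. inI e x \<and> (\<forall>y<Suc x. inI e y \<longrightarrow> (\<exists>w<W. U e y w = 0)))"
proof
  assume "x \<in> Aset"
  then obtain e where e: "inI e x" "\<forall>y\<le>x. inI e y \<longrightarrow> y \<in> Ce e" unfolding Aset_def by blast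
  then have "\<forall>y<Suc x. inI e y \<longrightarrow> (\<exists>w. U e y w = 0)" unfolding Ce_def by (simp add: less_Suc_eq_le)
  from finite_choice_bound[OF this] obtain W where W: "\<forall>y<Suc x. inI e y \<longrightarrow> (\<exists>w<W. U e y w = 0)" ..
  have "e < Suc x" using inI_le[OF e(1)] by simp
  then show "\<exists>W. \<exists>e<Suc x. inI e x \<and> (\<forall>y<Suc x. inI e y \<longrightarrow> (\<exists>w<W. U e y w = 0))"
    using e(1) W by blast
next
  assume "\<exists>W. \<exists>e<Suc x. inI e x \<and> (\<forall>y<Suc x. inI e y \<longrightarrow> (\<exists>w<W. U e y w = 0))"
  then obtain W e where e: "inI e x" "\<And>y. y < Suc x \<Longrightarrow> inI e y \<Longrightarrow> \<exists>w<W. U e y w = 0"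
    by blast
  have "\<forall>y\<le>x. inI e y \<longrightarrow> y \<in> Ce e"
  proof (intro allI impI)
    fix y assume "y \<le> x" "inI e y"
    then obtain w where "U e y w = 0" using e(2)[of y] by auto
    then show "y \<in> Ce e" unfolding Ce_def by blast
  qed
  then show "x \<in> Aset" unfolding Aset_def using e(1) by blast
qed

lemma ce_Aset: "ce Aset"
proof -
  have "PRP 2 (\<lambda>zs. \<exists>e<Suc (zs!0). inI e (zs!0) \<and> (\<forall>y<Suc (zs!0). inI e y \<longrightarrow> (\<exists>w<zs!1. U e y w = 0)))"
    apply (rule PRP_bex2[where Q = "\<lambda>us. inI (us!0) (us!1) \<and> (\<forall>y<Suc (us!1). inI (us!0) y \<longrightarrow> (\<exists>w<us!2. U (us!0) y w = 0))"])
      apply (rule PRP_conj)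
       apply (rule PRP_inI; rule PRf_proj; simp)
      apply (rule PRP_ball2[where Q = "\<lambda>vs. inI (vs!1) (vs!0) \<longrightarrow> (\<exists>w<vs!3. U (vs!1) (vs!0) w = 0)"])
        apply (rule PRP_imp)
         apply (rule PRP_inI; rule PRf_proj; simp)
        apply (rule PRP_bex2[where Q = "\<lambda>ws. U (ws!2) (ws!1) (ws!0) = 0"])
          apply (rule PRP_eq, rule PRf_Ulift, (rule PRf_proj, simp)+, rule PRf_const)
         apply simp
        apply (rule PRf_proj, simp)
       apply simp
      apply (rule PRf_Suc, rule PRf_proj, simp)
     apply (simp add: len2)
    apply (rule PRf_Suc, rule PRf_proj, simp)
    done
  then obtain f where f: "PR 2 f" "\<And>xs. length xs = 2 \<Longrightarrow> f xs =
      (if \<exists>e<Suc (xs!0). inI e (xs!0) \<and> (\<forall>y<Suc (xs!0). inI e y \<longrightarrow> (\<exists>w<xs!1. U e y w = 0)) then 0 else 1)"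
    unfolding PRP_def PRf_def by blast
  show ?thesis unfolding ce_def
    by (rule exI[of _ f]) (auto simp: f Aset_alt)
qed

lemma Pi01_Ce: "Pi01 B \<Longrightarrow> \<exists>e. - B = Ce e"
proof -
  assume "Pi01 B"
  then obtain f where f: "PR 2 f" "\<And>x. x \<in> - B \<longleftrightarrow> (\<exists>y. f [x, y] = 0)"
    unfolding Pi01_def ce_def by blast
  obtain e where "\<forall>x. (\<exists>y. f [x, y] = 0) \<longleftrightarrow> (\<exists>y. U e x y = 0)" using U_universal[OF f(1)] by blast
  then have "- B = Ce e" unfolding Ce_def using f(2) by blast
  then show ?thesis by blast
qed

definition Iset :: "nat \<Rightarrow> nat set" where "Iset e = {z. inI e z}"
definition Tset :: "nat \<Rightarrow> nat set" where "Tset N = {z. 2 ^ N dvd Suc z}"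
definition cnt :: "nat set \<Rightarrow> nat \<Rightarrow> nat" where "cnt X n = card (X \<inter> {..<n})"

lemma card_dvd: "(d::nat) > 0 \<Longrightarrow> card {z. z < n \<and> d dvd Suc z} = n div d"
proof (induction n)
  case 0 then show ?case by simp
next
  case (Suc n)
  show ?case
  proof (cases "d dvd Suc n")
    case True
    have s: "{z. z < Suc n \<and> d dvd Suc z} = insert n {z. z < n \<and> d dvd Suc z}"
      using True by (auto simp: less_Suc_eq)
    have m: "Suc n mod d = 0" using True by (simp add: dvd_eq_mod_eq_0)
    have dv: "Suc n div d = Suc (n div d)" by (simp only: div_Suc if_P[OF m])
    have ni: "n \<notin> {z. z < n \<and> d dvd Suc z}" by simp
    have fi: "finite {z. z < n \<and> d dvd Suc z}" by (rule finite_subset[of _ "{..<n}"]) auto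
    have "card (insert n {z. z < n \<and> d dvd Suc z}) = Suc (card {z. z < n \<and> d dvd Suc z})"
      by (rule card_insert_disjoint[OF fi ni])
    then show ?thesis unfolding s dv Suc.IH[OF Suc.prems] .
  next
    case False
    then have s: "{z. z < Suc n \<and> d dvd Suc z} = {z. z < n \<and> d dvd Suc z}"
      by (auto simp: less_Suc_eq)
    have m: "Suc n mod d \<noteq> 0" using False by (simp add: dvd_eq_mod_eq_0)
    have dv: "Suc n div d = n div d" by (simp only: div_Suc if_not_P[OF m])
    show ?thesis using Suc.IH[OF Suc.prems] unfolding s dv .
  qed
qed

lemma cnt_T: "cnt (Tset N) n = n div 2 ^ N"
proof -
  have "Tset N \<inter> {..<n} = {z. z < n \<and> 2 ^ N dvd Suc z}" unfolding Tset_def by auto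
  then show ?thesis unfolding cnt_def using card_dvd[of "2^N" n] by simp
qed

lemma Iset_T: "Iset e = Tset e - Tset (Suc e)"
  unfolding Iset_def Tset_def inI_def by auto

lemma T_mono: "Tset (Suc e) \<subseteq> Tset e"
  unfolding Tset_def by (auto intro: dvd_trans[rotated] simp: le_imp_power_dvd)

lemma cnt_I: "cnt (Iset e) n = n div 2 ^ e - n div 2 ^ Suc e"
proof -
  have "Iset e \<inter> {..<n} = (Tset e \<inter> {..<n}) - (Tset (Suc e) \<inter> {..<n})"
    unfolding Iset_T by auto
  moreover have "Tset (Suc e) \<inter> {..<n} \<subseteq> Tset e \<inter> {..<n}" using T_mono by auto
  ultimately show ?thesis using cnt_T[of e n] cnt_T[of "Suc e" n] unfolding cnt_def
    by (simp add: card_Diff_subset del: power_Suc)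
qed

lemma inI_unique: "inI e z \<Longrightarrow> inI e' z \<Longrightarrow> e = e'"
proof (rule ccontr)
  assume a: "inI e z" "inI e' z" "e \<noteq> e'"
  show False
  proof (cases "e < e'")
    case True
    then have "2 ^ Suc e dvd Suc z" using a(2) unfolding inI_def
      by (meson Suc_leI dvd_trans le_imp_power_dvd)
    then show False using a(1) unfolding inI_def by simp
  next
    case False
    then have "e' < e" using a(3) by simp
    then have "2 ^ Suc e' dvd Suc z" using a(1) unfolding inI_def
      by (meson Suc_leI dvd_trans le_imp_power_dvd)
    then show False using a(2) unfolding inI_def by simp
  qed
qed

lemma pow_dvd_le: "2 ^ k dvd Suc z \<Longrightarrow> k \<le> z"
proof -
  assume "2 ^ k dvd Suc z"
  then have "2 ^ k \<le> Suc z" by (auto intro: dvd_imp_le)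
  moreover have "k < 2 ^ k" by (rule less_exp)
  ultimately show ?thesis by linarith
qed

lemma inI_exists: "\<exists>e. inI e z"
proof -
  let ?P = "\<lambda>k. (2::nat) ^ k dvd Suc z"
  let ?G = "Greatest ?P"
  have "?P ?G" by (rule GreatestI_nat[of ?P 0 z]) (auto intro: pow_dvd_le)
  moreover have "\<not> ?P (Suc ?G)"
  proof
    assume "?P (Suc ?G)"
    then have "Suc ?G \<le> ?G" by (rule Greatest_le_nat[of ?P _ z]) (auto intro: pow_dvd_le)
    then show False by simp
  qed
  ultimately show ?thesis unfolding inI_def by blast
qed

lemma T_iff: "z \<in> Tset N \<longleftrightarrow> (\<exists>e\<ge>N. inI e z)"
proof
  assume zT: "z \<in> Tset N"
  obtain e where e: "inI e z" using inI_exists by blast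
  have "N \<le> e"
  proof (rule ccontr)
    assume "\<not> N \<le> e"
    then have "Suc e \<le> N" by simp
    then have "(2::nat) ^ Suc e dvd 2 ^ N" by (rule le_imp_power_dvd)
    moreover have "2 ^ N dvd Suc z" using zT unfolding Tset_def by simp
    ultimately have "2 ^ Suc e dvd Suc z" by (rule dvd_trans)
    then show False using e unfolding inI_def by simp
  qed
  then show "\<exists>e\<ge>N. inI e z" using e by blast
next
  assume "\<exists>e\<ge>N. inI e z"
  then obtain e where "N \<le> e" "2 ^ e dvd Suc z" unfolding inI_def by blast
  moreover have "(2::nat) ^ N dvd 2 ^ e" using \<open>N \<le> e\<close> by (rule le_imp_power_dvd)
  ultimately show "z \<in> Tset N" unfolding Tset_def using dvd_trans by blast
qed

lemma cnt_decomp: "cnt X n = (\<Sum>e<N. cnt (X \<inter> Iset e) n) + cnt (X \<inter> Tset N) n"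
proof -
  have eq: "X \<inter> {..<n} = (\<Union>e<N. X \<inter> Iset e \<inter> {..<n}) \<union> (X \<inter> Tset N \<inter> {..<n})"
  proof (intro equalityI subsetI)
    fix z assume z: "z \<in> X \<inter> {..<n}"
    obtain e where e: "inI e z" using inI_exists by blast
    show "z \<in> (\<Union>e<N. X \<inter> Iset e \<inter> {..<n}) \<union> (X \<inter> Tset N \<inter> {..<n})"
    proof (cases "e < N")
      case True
      then have "z \<in> X \<inter> Iset e \<inter> {..<n}" using z e unfolding Iset_def by blast
      then show ?thesis using True by blast
    next
      case False
      then have "N \<le> e" by simp
      then have "z \<in> Tset N" using T_iff e by blast
      then show ?thesis using z by blast
    qed
  qed blast
  have disj1: "(\<Union>e<N. X \<inter> Iset e \<inter> {..<n}) \<inter> (X \<inter> Tset N \<inter> {..<n}) = {}"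
  proof (rule ccontr)
    assume "\<not> ?thesis"
    then obtain z e where "e < N" "inI e z" "z \<in> Tset N" unfolding Iset_def by blast
    then obtain e' where "e' \<ge> N" "inI e' z" using T_iff by blast
    moreover have "e' = e" using \<open>inI e z\<close> \<open>inI e' z\<close> by (rule inI_unique[rotated])
    ultimately show False using \<open>e < N\<close> by simp
  qed
  have fin: "\<And>i. finite (X \<inter> Iset i \<inter> {..<n})" by simp
  have dis: "\<forall>i\<in>{..<N}. \<forall>j\<in>{..<N}. i \<noteq> j \<longrightarrow> (X \<inter> Iset i \<inter> {..<n}) \<inter> (X \<inter> Iset j \<inter> {..<n}) = {}"
    unfolding Iset_def using inI_unique by blast
  have c1: "card (\<Union>e<N. X \<inter> Iset e \<inter> {..<n}) = (\<Sum>e<N. card (X \<inter> Iset e \<inter> {..<n}))"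
    by (rule card_UN_disjoint[OF finite_lessThan]) (use fin dis in blast)+
  have "card (X \<inter> {..<n}) = card (\<Union>e<N. X \<inter> Iset e \<inter> {..<n}) + card (X \<inter> Tset N \<inter> {..<n})"
    unfolding eq by (rule card_Un_disjoint) (use disj1 in simp_all)
  then show ?thesis unfolding cnt_def c1 .
qed

lemma div_bounds:
  assumes "(d::nat) > 0"
  shows "real n / d - 1 < real (n div d)" "real (n div d) \<le> real n / d"
proof -
  have e: "real (n div d) = of_int \<lfloor>real n / real d\<rfloor>"
    using floor_divide_of_nat_eq[of n d] by (metis of_int_of_nat_eq)
  show "real n / d - 1 < real (n div d)" unfolding e by linarith
  show "real (n div d) \<le> real n / d" unfolding e by linarith
qed

lemma X: assumes cI: "c = n div 2 ^ e - n div 2 ^ Suc e" shows "\<bar>real c - real n / 2 ^ Suc e\<bar> \<le> 1"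
proof -
  have le: "n div 2 ^ Suc e \<le> n div 2 ^ e"
    by (simp add: div_le_mono2)
  have b1: "real n / 2^e - 1 < real (n div 2^e)" "real (n div 2^e) \<le> real n / 2^e"
    using div_bounds[of "2^e" n] by simp_all
  have b2: "real n / 2^Suc e - 1 < real (n div 2^Suc e)" "real (n div 2^Suc e) \<le> real n / 2^Suc e"
    using div_bounds[of "2^Suc e" n] by (simp_all del: power_Suc)
  have h: "real n / 2^e = 2 * (real n / 2^Suc e)" by simp
  have c: "real c = real (n div 2^e) - real (n div 2^Suc e)"
    unfolding cI using le by (simp add: of_nat_diff del: power_Suc)
  define a where "a = real n / 2^Suc e"
  define x where "x = real (n div 2^e)"
  define y where "y = real (n div 2^Suc e)"
  have "2 * a - 1 < x" "x \<le> 2 * a" "a - 1 < y" "y \<le> a"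
    using b1 b2 h unfolding a_def[symmetric] x_def[symmetric] y_def[symmetric] by linarith+
  then have "\<bar>x - y - a\<bar> \<le> 1" by linarith
  then show ?thesis using c unfolding a_def x_def y_def by simp
qed

lemma cnt_I_bounds: "\<bar>real (cnt (Iset e) n) - real n / 2 ^ Suc e\<bar> \<le> 1"
  by (rule X) (rule cnt_I)

lemma dichotomy: "Iset e \<subseteq> Aset \<or> (\<exists>b. Aset \<inter> Iset e \<subseteq> {..<b})"
proof (cases "Iset e \<subseteq> Ce e")
  case True
  have "Iset e \<subseteq> Aset"
  proof
    fix x assume "x \<in> Iset e"
    then have "inI e x" unfolding Iset_def by simp
    moreover have "\<forall>y\<le>x. inI e y \<longrightarrow> y \<in> Ce e" using True unfolding Iset_def by blast
    ultimately show "x \<in> Aset" unfolding Aset_def by blast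
  qed
  then show ?thesis by blast
next
  case False
  then obtain x0 where x0: "inI e x0" "x0 \<notin> Ce e" unfolding Iset_def by blast
  have "Aset \<inter> Iset e \<subseteq> {..<x0}"
  proof
    fix x assume x: "x \<in> Aset \<inter> Iset e"
    then obtain e' where e': "inI e' x" "\<forall>y\<le>x. inI e' y \<longrightarrow> y \<in> Ce e'" unfolding Aset_def by blast
    have "inI e x" using x unfolding Iset_def by simp
    then have "e' = e" using e'(1) by (rule inI_unique[rotated])
    have "\<not> x0 \<le> x"
    proof
      assume "x0 \<le> x"
      then have "x0 \<in> Ce e" using e'(2) x0(1) \<open>e' = e\<close> by blast
      then show False using x0(2) by simp
    qed
    then show "x \<in> {..<x0}" by simp
  qed
  then show ?thesis by blast
qed

definition good :: "nat \<Rightarrow> bool" where "good e \<longleftrightarrow> Iset e \<subseteq> Aset"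
definition bnd :: "nat \<Rightarrow> nat" where "bnd e = (SOME b. Aset \<inter> Iset e \<subseteq> {..<b})"

lemma bnd: "\<not> good e \<Longrightarrow> Aset \<inter> Iset e \<subseteq> {..<bnd e}"
  unfolding bnd_def good_def using dichotomy[of e] by (metis (mono_tags, lifting) someI_ex)

lemma cnt_le_bnd: "\<not> good e \<Longrightarrow> cnt (Aset \<inter> Iset e) n \<le> bnd e"
proof -
  assume "\<not> good e"
  then have "Aset \<inter> Iset e \<inter> {..<n} \<subseteq> {..<bnd e}" using bnd by blast
  then have "card (Aset \<inter> Iset e \<inter> {..<n}) \<le> card {..<bnd e}" by (rule card_mono[rotated]) simp
  then show ?thesis unfolding cnt_def by simp
qed

definition LN :: "nat \<Rightarrow> real" where "LN N = (\<Sum>e<N. if good e then 1 / 2 ^ Suc e else 0)"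
definition KN :: "nat \<Rightarrow> real" where "KN N = (\<Sum>e<N. 1 + real (bnd e))"

lemma KN_nonneg: "KN N \<ge> 0"
  unfolding KN_def by (rule sum_nonneg) simp

lemma term_bound:
  "\<bar>real (cnt (Aset \<inter> Iset e) n) - real n * (if good e then 1 / 2 ^ Suc e else 0)\<bar> \<le> 1 + real (bnd e)"
proof (cases "good e")
  case True
  then have "Aset \<inter> Iset e = Iset e" unfolding good_def by blast
  then show ?thesis using True cnt_I_bounds[of e n] by simp
next
  case False
  then show ?thesis using cnt_le_bnd[of e n] by simp
qed

lemma est: "\<bar>real (cnt Aset n) - real n * LN N\<bar> \<le> KN N + real n / 2 ^ N"
proof -
  define c where "c e = real (cnt (Aset \<inter> Iset e) n) - real n * (if good e then 1 / 2 ^ Suc e else 0)" for e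
  define t where "t = real (cnt (Aset \<inter> Tset N) n)"
  have dec: "real (cnt Aset n) - real n * LN N = (\<Sum>e<N. c e) + t"
    unfolding c_def t_def LN_def cnt_decomp[of Aset n N]
    by (simp add: sum_subtractf sum_distrib_left)
  have "card (Aset \<inter> Tset N \<inter> {..<n}) \<le> card (Tset N \<inter> {..<n})" by (rule card_mono) auto
  then have "t \<le> real (cnt (Tset N) n)" unfolding t_def cnt_def by simp
  also have "\<dots> \<le> real n / 2 ^ N" unfolding cnt_T using div_bounds(2)[of "2^N" n] by simp
  finally have t1: "t \<le> real n / 2 ^ N" .
  have t0: "t \<ge> 0" unfolding t_def by simp
  have "\<bar>\<Sum>e<N. c e\<bar> \<le> (\<Sum>e<N. \<bar>c e\<bar>)" by (rule sum_abs)
  also have "\<dots> \<le> KN N" unfolding KN_def c_def by (rule sum_mono) (rule term_bound)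
  finally have "\<bar>\<Sum>e<N. c e\<bar> \<le> KN N" .
  then show ?thesis unfolding dec using t0 t1 by linarith
qed

lemma rho_cnt: "rho X n = real (cnt X n) / real n"
  unfolding rho_def cnt_def by simp

lemma est_rho: "\<bar>rho Aset (Suc n) - LN N\<bar> \<le> KN N / real (Suc n) + 1 / 2 ^ N"
proof -
  have pos: "real (Suc n) > 0" by simp
  have "\<bar>rho Aset (Suc n) - LN N\<bar> = \<bar>real (cnt Aset (Suc n)) - real (Suc n) * LN N\<bar> / real (Suc n)"
    unfolding rho_cnt using pos by (simp add: field_simps abs_divide)
  also have "\<dots> \<le> (KN N + real (Suc n) / 2 ^ N) / real (Suc n)"
    by (rule divide_right_mono[OF est]) simp
  also have "\<dots> = KN N / real (Suc n) + 1 / 2 ^ N" using pos by (simp add: field_simps)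
  finally show ?thesis .
qed

lemma density_Aset: "has_density Aset"
proof -
  have "Cauchy (\<lambda>n. rho Aset (Suc n))"
  proof (rule metric_CauchyI)
    fix \<epsilon> :: real assume \<epsilon>: "\<epsilon> > 0"
    obtain N where N: "(1/2::real) ^ N < \<epsilon> / 4" using real_arch_pow_inv[of "\<epsilon>/4" "1/2"] \<epsilon> by auto
    have N': "1 / 2 ^ N < \<epsilon> / 4" using N by (simp add: power_one_over)
    obtain M :: nat where M: "4 * KN N / \<epsilon> < real M" using reals_Archimedean2 by blast
    have small: "KN N / real (Suc m) < \<epsilon> / 4" if "m \<ge> M" for m
    proof -
      have "4 * KN N / \<epsilon> < real (Suc m)" using M that by simp
      then have "4 * KN N < \<epsilon> * real (Suc m)" using \<epsilon> by (simp add: field_simps)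
      then show ?thesis by (simp add: field_simps)
    qed
    show "\<exists>M. \<forall>m\<ge>M. \<forall>n\<ge>M. dist (rho Aset (Suc m)) (rho Aset (Suc n)) < \<epsilon>"
    proof (intro exI allI impI)
      fix m n assume mn: "m \<ge> M" "n \<ge> M"
      have a: "\<bar>rho Aset (Suc m) - LN N\<bar> < \<epsilon> / 2" using est_rho[of m N] small[OF mn(1)] N' by linarith
      have b: "\<bar>rho Aset (Suc n) - LN N\<bar> < \<epsilon> / 2" using est_rho[of n N] small[OF mn(2)] N' by linarith
      show "dist (rho Aset (Suc m)) (rho Aset (Suc n)) < \<epsilon>" unfolding dist_real_def using a b by linarith
    qed
  qed
  then have "convergent (\<lambda>n. rho Aset (Suc n))" by (simp add: Cauchy_convergent_iff)
  then show ?thesis unfolding has_density_def convergent_def .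
qed

lemma ld_mono: "X \<subseteq> Y \<Longrightarrow> lower_density X \<le> lower_density Y"
  unfolding lower_density_def
proof (rule Liminf_mono, rule always_eventually, rule allI)
  fix n :: nat assume "X \<subseteq> Y"
  then have "card (X \<inter> {..<Suc n}) \<le> card (Y \<inter> {..<Suc n})" by (intro card_mono) auto
  then show "ereal (rho X (Suc n)) \<le> ereal (rho Y (Suc n))" unfolding rho_def
    by (simp add: divide_right_mono)
qed

lemma ld_I: "lower_density (Iset e) > 0"
proof -
  let ?c = "1 / 2 ^ Suc (Suc e) :: real"
  have "eventually (\<lambda>n. ereal ?c \<le> ereal (rho (Iset e) (Suc n))) sequentially"
    unfolding eventually_sequentially
  proof (intro exI allI impI)
    fix n :: nat assume n: "2 ^ Suc (Suc e) \<le> n"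
    have "real (Suc n) / 2 ^ Suc e - 1 \<le> real (cnt (Iset e) (Suc n))" using cnt_I_bounds[of e "Suc n"] by linarith
    then have "(real (Suc n) / 2 ^ Suc e - 1) / real (Suc n) \<le> rho (Iset e) (Suc n)"
      unfolding rho_cnt by (rule divide_right_mono) simp
    moreover have "(real (Suc n) / 2 ^ Suc e - 1) / real (Suc n) = 1 / 2 ^ Suc e - 1 / real (Suc n)"
      by (simp add: field_simps)
    moreover have "1 / real (Suc n) \<le> 1 / 2 ^ Suc (Suc e)"
    proof -
      have "(2::real) ^ Suc (Suc e) \<le> real (Suc n)" using n
        by (metis le_SucI of_nat_le_iff of_nat_numeral of_nat_power)
      then show ?thesis by (simp add: frac_le)
    qed
    moreover have "1 / 2 ^ Suc e - 1 / 2 ^ Suc (Suc e) = (1 / 2 ^ Suc (Suc e) :: real)" by simp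
    ultimately show "ereal ?c \<le> ereal (rho (Iset e) (Suc n))" by simp
  qed
  then have "ereal ?c \<le> lower_density (Iset e)" unfolding lower_density_def by (rule Liminf_bounded)
  moreover have "ereal ?c > 0" by simp
  ultimately show ?thesis by order
qed

theorem main: "\<exists>A. ce A \<and> has_density A \<and>
           (\<forall>B. Pi01 B \<and> B \<subseteq> A \<longrightarrow> lower_density (A - B) > 0 \<and> dens_dist A B > 0)"
proof (intro exI conjI allI impI)
  show "ce Aset" by (rule ce_Aset)
  show "has_density Aset" by (rule density_Aset)
  fix B assume B: "Pi01 B \<and> B \<subseteq> Aset"
  obtain e where e: "- B = Ce e" using Pi01_Ce B by blast
  have IC: "Iset e \<subseteq> Ce e"
  proof
    fix z assume z: "z \<in> Iset e"
    show "z \<in> Ce e"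
    proof (rule ccontr)
      assume nz: "z \<notin> Ce e"
      have "z \<notin> Aset"
      proof
        assume "z \<in> Aset"
        then obtain e' where e': "inI e' z" "\<forall>y\<le>z. inI e' y \<longrightarrow> y \<in> Ce e'" unfolding Aset_def by blast
        have "inI e z" using z unfolding Iset_def by simp
        then have "e' = e" using e'(1) by (rule inI_unique[rotated])
        then show False using e'(2) \<open>inI e z\<close> nz by blast
      qed
      then have "z \<notin> B" using B by blast
      then show False using e nz by blast
    qed
  qed
  have IA: "Iset e \<subseteq> Aset"
  proof
    fix x assume "x \<in> Iset e"
    then have "inI e x" unfolding Iset_def by simp
    moreover have "\<forall>y\<le>x. inI e y \<longrightarrow> y \<in> Ce e" using IC unfolding Iset_def by blast
    ultimately show "x \<in> Aset" unfolding Aset_def by blast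
  qed
  have "Iset e \<subseteq> Aset - B" using IA IC e by blast
  then have l: "lower_density (Iset e) \<le> lower_density (Aset - B)" by (rule ld_mono)
  show "lower_density (Aset - B) > 0" using ld_I[of e] l by order
  have "lower_density (Aset - B) \<le> dens_dist Aset B" unfolding dens_dist_def by (rule ld_mono) blast
  then show "dens_dist Aset B > 0" using ld_I[of e] l by order
qed

theorem mainTheorem10:
  shows "\<exists>A. ce A \<and> has_density A \<and>
           (\<forall>B. Pi01 B \<and> B \<subseteq> A \<longrightarrow> lower_density (A - B) > 0 \<and> dens_dist A B > 0)"
  by (rule main)

end
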